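(* Let $A$ be an $n\times n$ dilation matrix, $F=[-\tfrac12,\tfrac12)^n$, $D=A(F)\cap\mathbb{Z}^n$, and let $\|\cdot\|'$ be the norm $\|x\|'=(\sum_{j\ge0}\|A^{-j}x\|_2^2)^{1/2}$. Put $m=\min\{\|Ax\|':\|x\|'=1\}$, $M=\max\{\|Ax\|':\|x\|'=1\}$, $\rho=\max\{\|f\|':f\in \overline{F}\}$, and $R=\frac{M\rho}{m-1}$. For $x_0\in\mathbb{Z}^n$ let $(x_j)_{j\ge0}$ be the sequence defined by the Euclidean algorithm $x_j=Ax_{j+1}+r_j$ with $x_{j+1}\in\mathbb{Z}^n$, $r_j\in D$. Then $m>1$, and: if $\|x_j\|'>R$ then $\|x_{j+1}\|'<\|x_j\|'$; and if $\|x_j\|'\le R$ then $\|x_{j+1}\|'\le R$. Consequently there is $N$ such that $\|x_j\|'\le R$ for all $j\ge N$, and the sequence $(x_j)$ is eventually periodic.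
   Context: A dilation matrix is an $n\times n$ matrix with integer entries all of whose eigenvalues $\lambda$ satisfy $|\lambda|>1$. $D$ is a complete set of coset representatives of $\mathbb{Z}^n/A(\mathbb{Z}^n)$, so the decomposition $x_j=Ax_{j+1}+r_j$ is unique. *)

theory Defs
  imports "HOL-Analysis.Analysis"
begin

text \<open>Integer lattice Z^n inside R^n (dimension = CARD('n)).\<close>
definition int_vecs :: "(real^'n) set" where
  "int_vecs = {x. \<forall>i. x $ i \<in> \<int>}"

text \<open>Complex eigenvalues of a real square matrix.\<close>
definition complex_eigenvalue :: "real^'n^'n \<Rightarrow> complex \<Rightarrow> bool" where
  "complex_eigenvalue A c \<longleftrightarrow>
     (\<exists>v::complex^'n. v \<noteq> 0 \<and>
        (\<chi> i j. complex_of_real (A $ i $ j)) *v v = c *s v)"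

text \<open>Dilation matrix: integer entries, all eigenvalues of modulus > 1.\<close>
definition dilation_matrix :: "real^'n^'n \<Rightarrow> bool" where
  "dilation_matrix A \<longleftrightarrow> (\<forall>i j. A $ i $ j \<in> \<int>) \<and>
     (\<forall>c. complex_eigenvalue A c \<longrightarrow> 1 < cmod c)"

text \<open>F = [-1/2,1/2)^n.\<close>
definition half_cube :: "(real^'n) set" where
  "half_cube = {x. \<forall>i. -1/2 \<le> x $ i \<and> x $ i < 1/2}"

text \<open>Digit set D = A(F) \<inter> Z^n.\<close>
definition digits :: "real^'n^'n \<Rightarrow> (real^'n) set" where
  "digits A = ((\<lambda>x. A *v x) ` half_cube) \<inter> int_vecs"

text \<open>The norm ||x||' = (sum_{j>=0} ||A^{-j} x||_2^2)^{1/2}.\<close>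
definition normA :: "real^'n^'n \<Rightarrow> real^'n \<Rightarrow> real" where
  "normA A x = sqrt (\<Sum>j. (norm (((\<lambda>v. matrix_inv A *v v) ^^ j) x))\<^sup>2)"

end

theory Submission imports Defs "Jordan_Normal_Form.Spectral_Radius" begin

no_notation vec_index (infixl "$" 100)

definition toM :: "(nat \<Rightarrow> 'n) \<Rightarrow> 'a^'n^'n \<Rightarrow> 'a mat" where
  "toM ix X = Matrix.mat CARD('n) CARD('n) (\<lambda>(i,j). X $ ix i $ ix j)"
definition toV :: "(nat \<Rightarrow> 'n) \<Rightarrow> 'a^'n \<Rightarrow> 'a Matrix.vec" where
  "toV ix v = Matrix.vec CARD('n) (\<lambda>i. v $ ix i)"

lemma toM_carrier: "toM ix (X::'a^'n^'n) \<in> carrier_mat CARD('n) CARD('n)"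
  by (simp add: toM_def)
lemma toV_carrier: "toV ix (v::'a^'n) \<in> carrier_vec CARD('n)"
  by (simp add: toV_def)

lemma toV_mult:
  fixes X :: "'a::comm_semiring_1^'n^'n"
  assumes bij: "bij_betw ix {0..<CARD('n)} (UNIV::'n set)"
  shows "toV ix (X *v v) = toM ix X *\<^sub>v toV ix v"
proof (rule eq_vecI)
  show "dim_vec (toV ix (X *v v)) = dim_vec (toM ix X *\<^sub>v toV ix v)"
    by (simp add: toV_def toM_def)
  fix i assume i: "i < dim_vec (toM ix X *\<^sub>v toV ix v)"
  hence i': "i < CARD('n)" by (simp add: toM_def)
  have "vec_index (toM ix X *\<^sub>v toV ix v) i = (\<Sum>j\<in>{0..<CARD('n)}. X $ ix i $ ix j * v $ ix j)"
    using i' by (simp add: toM_def toV_def scalar_prod_def)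
  also have "\<dots> = (\<Sum>j\<in>UNIV. X $ ix i $ j * v $ j)"
    using sum.reindex_bij_betw[OF bij, of "\<lambda>j. X $ ix i $ j * v $ j"] by simp
  also have "\<dots> = vec_index (toV ix (X *v v)) i"
    using i' by (simp add: toV_def matrix_vector_mult_def)
  finally show "vec_index (toV ix (X *v v)) i = vec_index (toM ix X *\<^sub>v toV ix v) i" by simp
qed

lemma toV_inj:
  assumes bij: "bij_betw ix {0..<CARD('n)} (UNIV::'n set)"
  and "toV ix (v::'a^'n) = toV ix w" shows "v = w"
proof -
  { fix j :: 'n
    have "j \<in> ix ` {0..<CARD('n)}" using bij unfolding bij_betw_def by simp
    then obtain i where i: "i < CARD('n)" "ix i = j" by force
    have "vec_index (toV ix v) i = vec_index (toV ix w) i" using assms by simp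
    hence "v $ j = w $ j" using i by (simp add: toV_def) }
  thus ?thesis by (simp add: Finite_Cartesian_Product.vec_eq_iff)
qed

lemma toV_zero: "toV ix (0::'a::zero^'n) = 0\<^sub>v CARD('n)"
  by (simp add: toV_def zero_vec_def)

lemma toV_surj:
  assumes bij: "bij_betw ix {0..<CARD('n)} (UNIV::'n set)"
  and w: "w \<in> carrier_vec CARD('n)"
  shows "toV ix ((\<chi> j. vec_index w (inv_into {0..<CARD('n)} ix j)) :: 'a^'n) = w"
proof (rule eq_vecI)
  show "dim_vec (toV ix ((\<chi> j. vec_index w (inv_into {0..<CARD('n)} ix j)) :: 'a^'n)) = dim_vec w"
    using w by (simp add: toV_def)
  fix i assume "i < dim_vec w"
  hence i: "i < CARD('n)" using w by simp
  have "inv_into {0..<CARD('n)} ix (ix i) = i"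
    using bij i by (simp add: bij_betw_def inv_into_f_f)
  thus "vec_index (toV ix ((\<chi> j. vec_index w (inv_into {0..<CARD('n)} ix j)) :: 'a^'n)) i = vec_index w i"
    using i by (simp add: toV_def)
qed

lemma toV_iter:
  fixes X :: "'a::comm_semiring_1^'n^'n"
  assumes bij: "bij_betw ix {0..<CARD('n)} (UNIV::'n set)"
  shows "toV ix (((\<lambda>v. X *v v)^^k) v) = (toM ix X ^\<^sub>m k) *\<^sub>v toV ix v"
proof (induction k arbitrary: v)
  case 0
  then show ?case using toV_carrier[of ix v] by (simp add: toM_def)
next
  case (Suc k)
  have "toV ix (((\<lambda>v. X *v v)^^Suc k) v) = toV ix (((\<lambda>v. X *v v)^^k) (X *v v))"
    by (simp add: funpow_Suc_right del: funpow.simps)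
  also have "\<dots> = (toM ix X ^\<^sub>m k) *\<^sub>v (toM ix X *\<^sub>v toV ix v)"
    using Suc by (simp add: toV_mult[OF bij])
  also have "\<dots> = (toM ix X ^\<^sub>m Suc k) *\<^sub>v toV ix v"
    by (simp add: assoc_mult_mat_vec[of _ "CARD('n)" "CARD('n)" _ "CARD('n)", OF pow_carrier_mat[OF toM_carrier] toM_carrier toV_carrier])
  finally show ?case .
qed

lemma toV_smult: "toV ix (c *s (v::'a::times^'n)) = c \<cdot>\<^sub>v toV ix v"
  by (rule eq_vecI) (auto simp: toV_def)

lemma eig_to:
  fixes X :: "complex^'n^'n"
  assumes bij: "bij_betw ix {0..<CARD('n)} (UNIV::'n set)"
  and ev: "eigenvalue (toM ix X) \<mu>"
  shows "\<exists>v. v \<noteq> 0 \<and> X *v v = \<mu> *s v"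
proof -
  obtain w where w: "w \<in> carrier_vec CARD('n)" "w \<noteq> 0\<^sub>v CARD('n)" "toM ix X *\<^sub>v w = \<mu> \<cdot>\<^sub>v w"
    using ev unfolding eigenvalue_def eigenvector_def by (auto simp: toM_def)
  define v :: "complex^'n" where "v = (\<chi> j. vec_index w (inv_into {0..<CARD('n)} ix j))"
  have tv: "toV ix v = w" unfolding v_def by (rule toV_surj[OF bij w(1)])
  have "v \<noteq> 0" using tv w(2) toV_zero by metis
  moreover have "toV ix (X *v v) = toV ix (\<mu> *s v)"
    using w(3) tv by (simp add: toV_mult[OF bij] toV_smult)
  hence "X *v v = \<mu> *s v" by (rule toV_inj[OF bij])
  ultimately show ?thesis by blast
qed

lemma eig_from:
  fixes X :: "complex^'n^'n"
  assumes bij: "bij_betw ix {0..<CARD('n)} (UNIV::'n set)"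
  and v: "v \<noteq> 0" "X *v v = \<mu> *s v"
  shows "eigenvalue (toM ix X) \<mu>"
proof -
  have "toV ix v \<noteq> 0\<^sub>v CARD('n)"
    using v(1) toV_inj[OF bij, of v 0] toV_zero by metis
  moreover have "toM ix X *\<^sub>v toV ix v = \<mu> \<cdot>\<^sub>v toV ix v"
    using v(2) by (metis toV_mult[OF bij] toV_smult)
  ultimately show ?thesis unfolding eigenvalue_def eigenvector_def
    using toV_carrier[of ix v] by (intro exI[of _ "toV ix v"]) (simp add: toM_def)
qed

lemma bound_mv:
  fixes M :: "complex mat"
  assumes M: "M \<in> carrier_mat n n" and b: "\<And>i j. i < n \<Longrightarrow> j < n \<Longrightarrow> cmod (M $$ (i,j)) \<le> b"
  and w: "w \<in> carrier_vec n" and i: "i < n"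
  shows "cmod (vec_index (M *\<^sub>v w) i) \<le> b * (\<Sum>j<n. cmod (vec_index w j))"
proof -
  have "vec_index (M *\<^sub>v w) i = (\<Sum>j\<in>{0..<n}. M $$ (i,j) * vec_index w j)"
    using M w i by (simp add: scalar_prod_def)
  hence "cmod (vec_index (M *\<^sub>v w) i) \<le> (\<Sum>j\<in>{0..<n}. cmod (M $$ (i,j)) * cmod (vec_index w j))"
    by (metis (no_types, lifting) norm_mult norm_sum sum.cong)
  also have "\<dots> \<le> (\<Sum>j\<in>{0..<n}. b * cmod (vec_index w j))"
    by (intro sum_mono mult_right_mono) (auto intro: b i)
  also have "\<dots> = b * (\<Sum>j<n. cmod (vec_index w j))"
    by (simp add: sum_distrib_left atLeast0LessThan)
  finally show ?thesis .
qed

lemma scaled_iter: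
  fixes X :: "'a::comm_ring_1^'n^'n"
  shows "((\<lambda>v. (\<chi> i j. a * X$i$j) *v v)^^k) v = a^k *s ((\<lambda>v. X *v v)^^k) v"
proof (induction k)
  case 0 then show ?case by simp
next
  case (Suc k)
  have "(\<chi> i j. a * X$i$j) *v w = a *s (X *v w)" for w :: "'a^'n"
    by (simp add: Finite_Cartesian_Product.vec_eq_iff matrix_vector_mult_def sum_distrib_left mult.assoc)
  then show ?case using Suc by (simp add: Finite_Cartesian_Product.vec_eq_iff matrix_vector_mult_def sum_distrib_left mult_ac)
qed

definition cx :: "real^'n \<Rightarrow> complex^'n" where "cx x = (\<chi> i. complex_of_real (x$i))"
definition cM :: "real^'n^'n \<Rightarrow> complex^'n^'n" where "cM X = (\<chi> i j. complex_of_real (X$i$j))"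

lemma cx_mult: "cx (X *v x) = cM X *v cx x"
  by (simp add: Finite_Cartesian_Product.vec_eq_iff cx_def cM_def matrix_vector_mult_def)

lemma cx_iter: "cx (((\<lambda>v. B *v v)^^k) x) = ((\<lambda>v. cM B *v v)^^k) (cx x)"
  by (induction k) (simp_all add: cx_mult)

lemma cM_mult: "cM (X ** Y) = cM X ** cM Y"
  by (simp add: Finite_Cartesian_Product.vec_eq_iff cM_def matrix_matrix_mult_def)

lemma cM_one: "cM (Finite_Cartesian_Product.mat 1) = Finite_Cartesian_Product.mat 1"
  by (simp add: Finite_Cartesian_Product.vec_eq_iff cM_def Finite_Cartesian_Product.mat_def)


lemma L1_le: "(\<Sum>j\<in>UNIV. \<bar>(x::real^'n) $ j\<bar>) \<le> real CARD('n) * norm x"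
proof -
  have "(\<Sum>j\<in>UNIV. \<bar>x $ j\<bar>) \<le> (\<Sum>j\<in>(UNIV::'n set). norm x)"
    by (intro sum_mono) (simp add: component_le_norm_cart)
  thus ?thesis by simp
qed

lemma power_bound:
  fixes A B :: "real^'n^'n"
  assumes AB: "A ** B = Finite_Cartesian_Product.mat 1"
  and ev: "\<And>c. complex_eigenvalue A c \<Longrightarrow> 1 < cmod c"
  shows "\<exists>c q. 0 < q \<and> q < 1 \<and> 0 \<le> c \<and> (\<forall>k x. norm (((\<lambda>v. B *v v)^^k) x) \<le> c * q^k * norm x)"
proof -
  obtain ix where bij: "bij_betw ix {0..<CARD('n)} (UNIV::'n set)"
    using ex_bij_betw_nat_finite[of "UNIV::'n set"] by auto
  define n where "n = CARD('n)"
  have n0: "0 < n" by (simp add: n_def)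
  define Bc where "Bc = cM B"
  define Dm where "Dm = toM ix Bc"
  have Dc: "Dm \<in> carrier_mat n n" by (simp add: Dm_def n_def toM_carrier)
  have evB: "cmod \<mu> < 1" if "v \<noteq> 0" "Bc *v v = \<mu> *s v" for v \<mu>
  proof -
    have "v = cM A *v (Bc *v v)"
      by (simp add: Bc_def matrix_vector_mul_assoc cM_mult[symmetric] AB cM_one)
    also have "\<dots> = \<mu> *s (cM A *v v)" using that(2) by (simp add: vector_scalar_commute)
    finally have v: "v = \<mu> *s (cM A *v v)" .
    have "\<mu> \<noteq> 0" using v that(1) by auto
    have "(1/\<mu>) *s v = cM A *v v"
      using \<open>\<mu> \<noteq> 0\<close> by (subst v) (simp add: vector_smult_assoc)
    hence "complex_eigenvalue A (1/\<mu>)" unfolding complex_eigenvalue_def using that(1)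
      by (auto simp: cM_def)
    hence "1 < cmod (1/\<mu>)" by (rule ev)
    thus ?thesis using \<open>\<mu> \<noteq> 0\<close> by (simp add: norm_divide field_simps)
  qed
  define s where "s = spectral_radius Dm"
  obtain \<mu>0 where mu0: "eigenvalue Dm \<mu>0" "s = cmod \<mu>0"
    using spectral_radius_mem_max(1)[OF Dc n0] unfolding s_def spectrum_def by auto
  have s: "0 \<le> s" "s < 1"
    using mu0 eig_to[OF bij, of Bc \<mu>0] evB unfolding Dm_def by auto
  define q where "q = (1+s)/2"
  have q: "0 < q" "q < 1" "s < q" using s by (auto simp: q_def)
  define a where "a = complex_of_real (1/q)"
  define Cc where "Cc = (\<chi> i j. a * Bc$i$j)"
  define C where "C = toM ix Cc"
  have Cc: "C \<in> carrier_mat n n" by (simp add: C_def n_def toM_carrier)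
  have Cmv: "Cc *v v = a *s (Bc *v v)" for v
    using scaled_iter[where a=a and X=Bc and k=1 and v=v] by (simp add: Cc_def)
  have "spectral_radius C < 1"
  proof -
    obtain \<mu> where mu: "eigenvalue C \<mu>" "spectral_radius C = cmod \<mu>"
      using spectral_radius_mem_max(1)[OF Cc n0] unfolding spectrum_def by auto
    obtain v where v: "v \<noteq> 0" "Cc *v v = \<mu> *s v" using eig_to[OF bij, of Cc \<mu>] mu(1) C_def by auto
    have "Bc *v v = (complex_of_real q * \<mu>) *s v"
    proof -
      have "Bc *v v = complex_of_real q *s (Cc *v v)"
        using q(1) by (simp add: Cmv a_def vector_smult_assoc)
      thus ?thesis using v(2) by (simp add: vector_smult_assoc)
    qed
    hence "eigenvalue Dm (complex_of_real q * \<mu>)" unfolding Dm_def by (rule eig_from[OF bij v(1)])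
    hence "cmod (complex_of_real q * \<mu>) \<le> s"
      unfolding s_def by (intro spectral_radius_mem_max(2)[OF Dc n0]) (auto simp: spectrum_def)
    hence "q * cmod \<mu> \<le> s" using q(1) by (simp add: norm_mult)
    hence "q * cmod \<mu> < q * 1" using q by linarith
    thus ?thesis using mu(2) q(1) mult_less_cancel_left_pos by metis
  qed
  then obtain c' where nb: "\<And>k. norm_bound (C ^\<^sub>m k) c'"
    using spectral_radius_jnf_norm_bound_less_1_upper_triangular[OF Cc] by auto
  have c'0: "0 \<le> c'"
  proof -
    have "\<forall>i<n. \<forall>j<n. cmod ((C ^\<^sub>m 0) $$ (i,j)) \<le> c'"
      using nb[of 0] Cc unfolding norm_bound_def by auto
    then have "cmod ((C ^\<^sub>m 0) $$ (0,0)) \<le> c'" using n0 by blast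
    thus ?thesis by (meson norm_ge_zero order_trans)
  qed
  define c where "c = real n * real n * c'"
  have "0 \<le> c" using c'0 by (simp add: c_def)
  moreover have "norm (((\<lambda>v. B *v v)^^k) x) \<le> c * q^k * norm x" for k x
  proof -
    define y where "y = ((\<lambda>v. B *v v)^^k) x"
    define z where "z = ((\<lambda>v. Cc *v v)^^k) (cx x)"
    define w where "w = toV ix (cx x)"
    have w: "w \<in> carrier_vec n" by (simp add: w_def n_def toV_carrier)
    have cy: "cx y = complex_of_real (q^k) *s z"
    proof -
      have "z = a^k *s ((\<lambda>v. Bc *v v)^^k) (cx x)" unfolding z_def Cc_def by (rule scaled_iter)
      hence "complex_of_real (q^k) *s z = (complex_of_real (q^k) * a^k) *s ((\<lambda>v. Bc *v v)^^k) (cx x)"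
        by (simp add: vector_smult_assoc)
      also have "complex_of_real (q^k) * a^k = complex_of_real (q^k * (1/q)^k)"
        unfolding a_def by simp
      also have "q^k * (1/q)^k = 1" using q(1) by (simp add: power_mult_distrib[symmetric])
      finally show ?thesis by (simp add: y_def cx_iter Bc_def)
    qed
    have tz: "toV ix z = (C ^\<^sub>m k) *\<^sub>v w" unfolding z_def C_def w_def by (rule toV_iter[OF bij])
    have sw: "(\<Sum>j<n. cmod (vec_index w j)) = (\<Sum>j\<in>UNIV. \<bar>x $ j\<bar>)"
    proof -
      have "(\<Sum>j<n. cmod (vec_index w j)) = (\<Sum>j\<in>{0..<n}. \<bar>x $ ix j\<bar>)"
        by (intro sum.cong) (auto simp: w_def toV_def n_def cx_def)
      also have "\<dots> = (\<Sum>j\<in>UNIV. \<bar>x $ j\<bar>)"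
        using sum.reindex_bij_betw[OF bij, of "\<lambda>j. \<bar>x $ j\<bar>"] by (simp add: n_def)
      finally show ?thesis .
    qed
    have comp: "\<bar>y $ i\<bar> \<le> q^k * c' * (\<Sum>j\<in>UNIV. \<bar>x $ j\<bar>)" for i
    proof -
      define j where "j = inv_into {0..<n} ix i"
      have ii: "i \<in> ix ` {0..<n}" using bij by (simp add: bij_betw_def n_def)
      have j: "j < n" "ix j = i" using inv_into_into[OF ii] f_inv_into_f[OF ii] unfolding j_def by auto
      have "\<bar>y $ i\<bar> = cmod (cx y $ i)" by (simp add: cx_def)
      also have "\<dots> = q^k * cmod (z $ i)" using cy q(1) by (simp add: norm_mult norm_power)
      also have "z $ i = vec_index (toV ix z) j" using j by (simp add: toV_def n_def)
      also have "\<dots> = vec_index ((C ^\<^sub>m k) *\<^sub>v w) j" by (simp add: tz)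
      also have "cmod \<dots> \<le> c' * (\<Sum>j<n. cmod (vec_index w j))"
      proof (rule bound_mv[OF pow_carrier_mat[OF Cc] _ w j(1)])
        fix i j assume "i < n" "j < n"
        thus "cmod ((C ^\<^sub>m k) $$ (i,j)) \<le> c'" using nb[of k] pow_carrier_mat[OF Cc, of k] Cc
          unfolding norm_bound_def by (auto split: if_splits)
      qed
      finally show ?thesis using q(1) sw by (simp add: mult_left_mono mult.assoc)
    qed
    have "norm y \<le> (\<Sum>i\<in>UNIV. \<bar>y $ i\<bar>)" by (rule norm_le_l1_cart)
    also have "\<dots> \<le> (\<Sum>i\<in>(UNIV::'n set). q^k * c' * (\<Sum>j\<in>UNIV. \<bar>x $ j\<bar>))"
      by (intro sum_mono comp)
    also have "\<dots> = real n * (q^k * c' * (\<Sum>j\<in>UNIV. \<bar>x $ j\<bar>))" by (simp add: n_def)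
    also have "\<dots> \<le> real n * (q^k * c' * (real n * norm x))"
      using L1_le[of x] q(1) c'0 by (intro mult_left_mono) (auto simp: n_def)
    also have "\<dots> = c * q^k * norm x" by (simp add: c_def)
    finally show ?thesis by (simp add: y_def)
  qed
  ultimately show ?thesis using q by blast
qed




definition itr :: "real^'n^'n \<Rightarrow> nat \<Rightarrow> real^'n \<Rightarrow> real^'n" where
  "itr A j x = ((\<lambda>v. matrix_inv A *v v)^^j) x"

lemma normA_itr: "normA A x = sqrt (\<Sum>j. (norm (itr A j x))\<^sup>2)"
  by (simp add: normA_def itr_def)

lemma itr_add: "itr A j (x + y) = itr A j x + itr A j y"
  by (induction j) (simp_all add: itr_def matrix_vector_right_distrib)

lemma itr_scale: "itr A j (t *\<^sub>R x) = t *\<^sub>R itr A j x"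
  by (induction j) (simp_all add: itr_def matrix_vector_mult_scaleR)

lemma itr_Suc: "itr A (Suc j) x = itr A j (matrix_inv A *v x)"
  by (simp add: itr_def funpow_Suc_right del: funpow.simps)

locale PB =
  fixes A :: "real^'n^'n" and c q :: real
  assumes BA: "matrix_inv A ** A = Finite_Cartesian_Product.mat 1"
  and AB: "A ** matrix_inv A = Finite_Cartesian_Product.mat 1"
  and q: "0 < q" "q < 1" and c: "0 \<le> c"
  and pb: "\<And>k x. norm (itr A k x) \<le> c * q^k * norm x"
begin

definition C1 where "C1 = sqrt (c\<^sup>2 / (1 - q\<^sup>2))"

lemma summ: "summable (\<lambda>j. (norm (itr A j x))\<^sup>2)"
  and suml: "(\<Sum>j. (norm (itr A j x))\<^sup>2) \<le> c\<^sup>2 * (norm x)\<^sup>2 / (1 - q\<^sup>2)"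
proof -
  have q2: "norm (q\<^sup>2) < 1" using q by (simp add: abs_square_less_1)
  have g: "(\<lambda>j. c\<^sup>2 * (norm x)\<^sup>2 * (q\<^sup>2)^j) sums (c\<^sup>2 * (norm x)\<^sup>2 * (1 / (1 - q\<^sup>2)))"
    by (intro sums_mult geometric_sums q2)
  have b: "norm ((norm (itr A j x))\<^sup>2) \<le> c\<^sup>2 * (norm x)\<^sup>2 * (q\<^sup>2)^j" for j
  proof -
    have "(norm (itr A j x))\<^sup>2 \<le> (c * q^j * norm x)\<^sup>2"
      by (intro power_mono pb) simp
    thus ?thesis by (simp add: power_mult_distrib power_mult[symmetric] mult_ac)
  qed
  show s: "summable (\<lambda>j. (norm (itr A j x))\<^sup>2)"
    by (rule summable_comparison_test'[OF sums_summable[OF g]]) (rule b)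
  have "(\<Sum>j. (norm (itr A j x))\<^sup>2) \<le> (\<Sum>j. c\<^sup>2 * (norm x)\<^sup>2 * (q\<^sup>2)^j)"
    using b by (intro suminf_le s sums_summable[OF g]) auto
  also have "\<dots> = c\<^sup>2 * (norm x)\<^sup>2 * (1 / (1 - q\<^sup>2))" using g by (simp add: sums_iff)
  finally show "(\<Sum>j. (norm (itr A j x))\<^sup>2) \<le> c\<^sup>2 * (norm x)\<^sup>2 / (1 - q\<^sup>2)" by simp
qed

lemma q2: "q\<^sup>2 < 1" using q by (simp add: abs_square_less_1)

lemma C1_pos: "0 \<le> C1" using q2 by (simp add: C1_def)

lemma nA_le: "normA A x \<le> C1 * norm x"
proof -
  have "normA A x \<le> sqrt (c\<^sup>2 * (norm x)\<^sup>2 / (1 - q\<^sup>2))"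
    unfolding normA_itr by (rule real_sqrt_le_mono[OF suml])
  also have "\<dots> = C1 * norm x" by (simp add: C1_def real_sqrt_mult real_sqrt_divide)
  finally show ?thesis .
qed

lemma nA_ge: "norm x \<le> normA A x"
proof -
  have "(\<Sum>j<1. (norm (itr A j x))\<^sup>2) \<le> (\<Sum>j. (norm (itr A j x))\<^sup>2)"
    by (rule sum_le_suminf[OF summ]) auto
  hence "(norm x)\<^sup>2 \<le> (\<Sum>j. (norm (itr A j x))\<^sup>2)" by (simp add: itr_def)
  hence "sqrt ((norm x)\<^sup>2) \<le> normA A x" unfolding normA_itr by (rule real_sqrt_le_mono)
  thus ?thesis by simp
qed

lemma nA_nonneg: "0 \<le> normA A x" unfolding normA_itr by (simp add: suminf_nonneg summ)

lemma nA_scale: "normA A (t *\<^sub>R x) = \<bar>t\<bar> * normA A x"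
proof -
  have "(\<Sum>j. (norm (itr A j (t *\<^sub>R x)))\<^sup>2) = (\<Sum>j. t\<^sup>2 * (norm (itr A j x))\<^sup>2)"
    by (simp add: itr_scale power_mult_distrib)
  also have "\<dots> = t\<^sup>2 * (\<Sum>j. (norm (itr A j x))\<^sup>2)" by (rule suminf_mult[OF summ])
  finally show ?thesis unfolding normA_itr by (simp add: real_sqrt_mult)
qed

lemma nA_zero: "normA A 0 = 0"
  using nA_scale[of 0 0] by simp

lemma nA_uminus: "normA A (- x) = normA A x"
  using nA_scale[of "-1" x] by simp

lemma nA_A: "(normA A (A *v x))\<^sup>2 = (norm (A *v x))\<^sup>2 + (normA A x)\<^sup>2"
proof -
  have e: "itr A (Suc j) (A *v x) = itr A j x" for j
    by (simp add: itr_Suc matrix_vector_mul_assoc BA)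
  have "(\<Sum>j. (norm (itr A j (A *v x)))\<^sup>2) = (norm (A *v x))\<^sup>2 + (\<Sum>j. (norm (itr A (Suc j) (A *v x)))\<^sup>2)"
    using suminf_split_head[OF summ[of "A *v x"]] by (simp add: itr_def)
  also have "\<dots> = (norm (A *v x))\<^sup>2 + (\<Sum>j. (norm (itr A j x))\<^sup>2)" by (simp add: e)
  finally show ?thesis unfolding normA_itr
    by (simp add: suminf_nonneg summ add_nonneg_nonneg)
qed

lemma nA_tri: "normA A (x + y) \<le> normA A x + normA A y"
proof -
  have "(\<Sum>j<N. (norm (itr A j (x + y)))\<^sup>2) \<le> (normA A x + normA A y)\<^sup>2" for N
  proof -
    have "L2_set (\<lambda>j. norm (itr A j (x + y))) {..<N}
        \<le> L2_set (\<lambda>j. norm (itr A j x) + norm (itr A j y)) {..<N}"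
      by (intro L2_set_mono) (auto simp: itr_add norm_triangle_ineq)
    also have "\<dots> \<le> L2_set (\<lambda>j. norm (itr A j x)) {..<N} + L2_set (\<lambda>j. norm (itr A j y)) {..<N}"
      by (rule L2_set_triangle_ineq)
    also have "L2_set (\<lambda>j. norm (itr A j z)) {..<N} \<le> normA A z" for z
      unfolding L2_set_def normA_itr
      by (intro real_sqrt_le_mono sum_le_suminf summ) auto
    hence "L2_set (\<lambda>j. norm (itr A j x)) {..<N} + L2_set (\<lambda>j. norm (itr A j y)) {..<N}
        \<le> normA A x + normA A y" by (intro add_mono)
    finally have "sqrt (\<Sum>j<N. (norm (itr A j (x + y)))\<^sup>2) \<le> normA A x + normA A y"
      by (simp add: L2_set_def)
    hence "(sqrt (\<Sum>j<N. (norm (itr A j (x + y)))\<^sup>2))\<^sup>2 \<le> (normA A x + normA A y)\<^sup>2"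
      by (rule power_mono) (auto intro!: sum_nonneg)
    moreover have "0 \<le> (\<Sum>j<N. (norm (itr A j (x + y)))\<^sup>2)" by (intro sum_nonneg) auto
    ultimately show ?thesis by simp
  qed
  hence "(\<Sum>j. (norm (itr A j (x + y)))\<^sup>2) \<le> (normA A x + normA A y)\<^sup>2"
    by (intro suminf_le_const summ)
  hence "normA A (x + y) \<le> sqrt ((normA A x + normA A y)\<^sup>2)"
    unfolding normA_itr by (rule real_sqrt_le_mono)
  thus ?thesis using nA_nonneg[of x] nA_nonneg[of y] by simp
qed

end



lemma inv_facts:
  fixes A :: "real^'n^'n"
  assumes ev: "\<And>c. complex_eigenvalue A c \<Longrightarrow> 1 < cmod c"
  shows "matrix_inv A ** A = Finite_Cartesian_Product.mat 1 \<and> A ** matrix_inv A = Finite_Cartesian_Product.mat 1"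
proof -
  have "\<forall>x. A *v x = 0 \<longrightarrow> x = 0"
  proof (intro allI impI, rule ccontr)
    fix x :: "real^'n" assume Ax: "A *v x = 0" and x: "x \<noteq> 0"
    have "cx x \<noteq> 0" using x by (auto simp: cx_def Finite_Cartesian_Product.vec_eq_iff)
    moreover have "cM A *v cx x = 0 *s cx x" using Ax cx_mult[of A x]
      by (simp add: cx_def Finite_Cartesian_Product.vec_eq_iff)
    ultimately have "complex_eigenvalue A 0" unfolding complex_eigenvalue_def cM_def by blast
    thus False using ev by fastforce
  qed
  then obtain B where B: "B ** A = Finite_Cartesian_Product.mat 1"
    using matrix_left_invertible_ker by blast
  hence "A ** B = Finite_Cartesian_Product.mat 1" using matrix_left_right_inverse by blast
  with B have "\<exists>A'. A ** A' = Finite_Cartesian_Product.mat 1 \<and> A' ** A = Finite_Cartesian_Product.mat 1" by blast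
  hence "A ** matrix_inv A = Finite_Cartesian_Product.mat 1 \<and> matrix_inv A ** A = Finite_Cartesian_Product.mat 1"
    unfolding matrix_inv_def by (rule someI_ex)
  thus ?thesis by blast
qed

lemma finite_ball: "finite {v \<in> (int_vecs::(real^'n) set). norm v \<le> r}"
proof -
  define S where "S = {k::real. k \<in> \<int> \<and> \<bar>k\<bar> \<le> r}"
  have "S \<subseteq> of_int ` {-\<lceil>r\<rceil>..\<lceil>r\<rceil>}"
  proof
    fix k assume "k \<in> S"
    then obtain z where z: "k = of_int z" "\<bar>of_int z\<bar> \<le> r" unfolding S_def by (auto elim: Ints_cases)
    have "of_int z \<le> r" "- r \<le> of_int z" using z(2) by auto
    hence "z \<le> \<lceil>r\<rceil>" "-\<lceil>r\<rceil> \<le> z" by linarith+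
    thus "k \<in> of_int ` {-\<lceil>r\<rceil>..\<lceil>r\<rceil>}" using z(1) by auto
  qed
  hence fS: "finite S" by (rule finite_subset) simp
  have "{v \<in> (int_vecs::(real^'n) set). norm v \<le> r} \<subseteq> (\<lambda>f. vec_lambda f) ` (PiE UNIV (\<lambda>_. S))"
  proof
    fix v :: "real^'n" assume v: "v \<in> {v \<in> int_vecs. norm v \<le> r}"
    have "vec_nth v \<in> PiE UNIV (\<lambda>_. S)"
      using v component_le_norm_cart[of v] order_trans by (auto simp: S_def int_vecs_def PiE_iff)
    moreover have "v = vec_lambda (vec_nth v)" by simp
    ultimately show "v \<in> (\<lambda>f. vec_lambda f) ` (PiE UNIV (\<lambda>_. S))" by blast
  qed
  moreover have "finite ((\<lambda>f. vec_lambda f) ` (PiE UNIV (\<lambda>_. S)))"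
    using fS by (intro finite_imageI finite_PiE) auto
  ultimately show ?thesis by (rule finite_subset)
qed

lemma det:
  fixes A :: "real^'n^'n"
  assumes BA: "matrix_inv A ** A = Finite_Cartesian_Product.mat 1"
  and y: "y \<in> int_vecs" "y' \<in> int_vecs"
  and d: "u - A *v y \<in> digits A" "u - A *v y' \<in> digits A"
  shows "y = y'"
proof -
  obtain f f' where f: "f \<in> half_cube" "u - A *v y = A *v f" "f' \<in> half_cube" "u - A *v y' = A *v f'"
    using d unfolding digits_def by force
  have "A *v (y' - y) = A *v (f - f')"
    using f(2,4) by (simp add: matrix_vector_mult_diff_distrib algebra_simps)
  hence "matrix_inv A *v (A *v (y' - y)) = matrix_inv A *v (A *v (f - f'))" by simp
  hence e: "y' - y = f - f'" by (simp add: matrix_vector_mul_assoc BA)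
  show ?thesis
  proof (subst Finite_Cartesian_Product.vec_eq_iff, rule allI, rule ccontr)
    fix i assume ne: "y $ i \<noteq> y' $ i"
    have "y' $ i - y $ i \<in> \<int>" using y unfolding int_vecs_def by (auto intro: Ints_diff)
    hence "1 \<le> \<bar>y' $ i - y $ i\<bar>" using ne by (intro Ints_nonzero_abs_ge1) auto
    moreover have "y' $ i - y $ i = f $ i - f' $ i" using e by (metis vector_minus_component)
    moreover have "\<bar>f $ i - f' $ i\<bar> < 1"
    proof -
      have "-1/2 \<le> f $ i" "f $ i < 1/2" "-1/2 \<le> f' $ i" "f' $ i < 1/2"
        using f(1,3) unfolding half_cube_def by auto
      thus ?thesis by linarith
    qed
    ultimately show False by linarith
  qed
qed

lemma alg_a:
  fixes m M \<rho> a a' :: real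
  assumes "1 < m" "m \<le> M" "0 \<le> \<rho>" "M * \<rho> / (m - 1) < a" "a' \<le> a / m + \<rho>"
  shows "a' < a"
proof -
  have "M * \<rho> < a * (m - 1)" using assms(1,4) by (simp add: pos_divide_less_eq)
  moreover have "m * \<rho> \<le> M * \<rho>" using assms(2,3) by (rule mult_right_mono)
  ultimately have "a + m * \<rho> < a * m" by (simp add: algebra_simps)
  hence "(a + m * \<rho>) / m < a" using assms(1) by (simp add: divide_less_eq)
  moreover have "a / m + \<rho> = (a + m * \<rho>) / m" using assms(1) by (simp add: field_simps)
  ultimately show ?thesis using assms(5) by linarith
qed

lemma alg_b:
  fixes m M \<rho> a a' :: real
  assumes "1 < m" "m \<le> M" "0 \<le> \<rho>" "a \<le> M * \<rho> / (m - 1)" "a' \<le> a / m + \<rho>"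
  shows "a' \<le> M * \<rho> / (m - 1)"
proof -
  define R where "R = M * \<rho> / (m - 1)"
  have "R * (m - 1) = M * \<rho>" using assms(1) by (simp add: R_def)
  moreover have "m * \<rho> \<le> M * \<rho>" using assms(2,3) by (rule mult_right_mono)
  ultimately have "R + m * \<rho> \<le> R * m" by (simp add: algebra_simps)
  hence "(R + m * \<rho>) / m \<le> R" using assms(1) by (simp add: divide_le_eq)
  moreover have "R / m + \<rho> = (R + m * \<rho>) / m" using assms(1) by (simp add: field_simps)
  moreover have "a / m \<le> R / m" using assms(1,4) unfolding R_def by (intro divide_right_mono) auto
  ultimately show ?thesis using assms(5) unfolding R_def by linarith
qed




theorem mainTheorem3:
  fixes A :: "real^'n^'n"
  assumes dil: "dilation_matrix A"
  defines "m \<equiv> Inf {normA A (A *v x) | x. normA A x = 1}"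
      and "M \<equiv> Sup {normA A (A *v x) | x. normA A x = 1}"
      and "\<rho> \<equiv> Sup (normA A ` closure half_cube)"
  defines "R \<equiv> M * \<rho> / (m - 1)"
  shows "1 < m \<and>
         (\<forall>x :: nat \<Rightarrow> real^'n.
           ((\<forall>j. x j \<in> int_vecs) \<and> (\<forall>j. x j - A *v x (Suc j) \<in> digits A)) \<longrightarrow>
           (\<forall>j. normA A (x j) > R \<longrightarrow> normA A (x (Suc j)) < normA A (x j)) \<and>
           (\<forall>j. normA A (x j) \<le> R \<longrightarrow> normA A (x (Suc j)) \<le> R) \<and>
           (\<exists>N. \<forall>j\<ge>N. normA A (x j) \<le> R) \<and>
           (\<exists>N p. 0 < p \<and> (\<forall>j\<ge>N. x (j + p) = x j)))"
proof -
  have ev: "\<And>c. complex_eigenvalue A c \<Longrightarrow> 1 < cmod c" using dil by (simp add: dilation_matrix_def)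
  have BA: "matrix_inv A ** A = Finite_Cartesian_Product.mat 1"
   and AB: "A ** matrix_inv A = Finite_Cartesian_Product.mat 1" using inv_facts[OF ev] by auto
  obtain c q where cq: "0 < q" "q < 1" "0 \<le> c"
    and pb0: "\<And>k x. norm (((\<lambda>v. matrix_inv A *v v)^^k) x) \<le> c * q^k * norm x"
    using power_bound[OF AB ev] by blast
  interpret P: PB A c q
    using cq BA AB pb0 by unfold_locales (auto simp: itr_def)
  define B where "B = matrix_inv A"
  define S where "S = {normA A (A *v x) | x. normA A x = 1}"
  have mS: "m = Inf S" and MS: "M = Sup S" by (simp_all add: m_def M_def S_def)
  define e :: "real^'n" where "e = 1"
  have e0: "e \<noteq> 0" by (simp add: e_def Finite_Cartesian_Product.vec_eq_iff)
  have ne: "0 < norm e" using e0 by simp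
  have nAe: "0 < normA A e" using P.nA_ge[of e] ne by linarith
  have C1p: "0 < P.C1"
  proof -
    have "norm e \<le> P.C1 * norm e" using P.nA_ge[of e] P.nA_le[of e] by linarith
    thus ?thesis using ne by (simp add: mult_le_cancel_right1 less_le_trans)
  qed
  have unit: "normA A ((1 / normA A y) *\<^sub>R y) = 1" if "0 < normA A y" for y
    using that by (simp add: P.nA_scale)
  have Sne: "S \<noteq> {}" unfolding S_def using unit[OF nAe] by blast
  have bddb: "bdd_below S" unfolding S_def by (rule bdd_belowI[of _ 0]) (auto simp: P.nA_nonneg)
  define cB where "cB = c * q + 1"
  have cBp: "0 < cB" using cq by (simp add: cB_def add_nonneg_pos)
  have Bb: "norm (B *v y) \<le> cB * norm y" for y
  proof -
    have "norm (B *v y) \<le> c * q * norm y" using P.pb[of 1 y] by (simp add: itr_def B_def)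
    also have "\<dots> \<le> cB * norm y" by (simp add: cB_def distrib_right)
    finally show ?thesis .
  qed
  define K where "K = P.C1 * cB"
  have Kp: "0 < K" using C1p cBp by (simp add: K_def)
  define m0 where "m0 = sqrt (1 + (1/K)\<^sup>2)"
  have m0: "1 < m0" using Kp by (simp add: m0_def)
  have low: "m0 \<le> normA A (A *v x)" if x: "normA A x = 1" for x
  proof -
    have "1 \<le> P.C1 * norm x" using P.nA_le[of x] x by simp
    also have "norm x = norm (B *v (A *v x))" by (simp add: B_def matrix_vector_mul_assoc BA)
    also have "P.C1 * \<dots> \<le> P.C1 * (cB * norm (A *v x))"
      using Bb C1p by (intro mult_left_mono) auto
    finally have "1 \<le> K * norm (A *v x)" by (simp add: K_def mult.assoc)
    hence "1/K \<le> norm (A *v x)" using Kp by (simp add: divide_le_eq mult.commute)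
    hence "(1/K)\<^sup>2 \<le> (norm (A *v x))\<^sup>2" using Kp by (intro power_mono) auto
    hence "1 + (1/K)\<^sup>2 \<le> (normA A (A *v x))\<^sup>2" using P.nA_A[of x] x by simp
    hence "m0 \<le> sqrt ((normA A (A *v x))\<^sup>2)" unfolding m0_def by (rule real_sqrt_le_mono)
    thus ?thesis using P.nA_nonneg by simp
  qed
  have "m0 \<le> m" unfolding mS by (rule cInf_greatest[OF Sne]) (auto simp: S_def intro: low)
  hence m1: "1 < m" using m0 by simp
  have K1: "m * normA A y \<le> normA A (A *v y)" for y
  proof (cases "y = 0")
    case True thus ?thesis by (simp add: P.nA_zero)
  next
    case False
    hence t: "0 < normA A y" using P.nA_ge[of y] by (metis zero_less_norm_iff order_less_le_trans)
    define x where "x = (1 / normA A y) *\<^sub>R y"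
    have "normA A x = 1" unfolding x_def by (rule unit[OF t])
    hence "normA A (A *v x) \<in> S" unfolding S_def by blast
    hence "m \<le> normA A (A *v x)" unfolding mS by (rule cInf_lower[OF _ bddb])
    also have "normA A (A *v x) = normA A (A *v y) / normA A y"
      using t by (simp add: x_def matrix_vector_mult_scaleR P.nA_scale)
    finally show ?thesis using t by (simp add: le_divide_eq)
  qed
  have K2: "normA A (B *v z) \<le> normA A z / m" for z
  proof -
    have "m * normA A (B *v z) \<le> normA A z" using K1[of "B *v z"]
      by (simp add: B_def matrix_vector_mul_assoc AB)
    thus ?thesis using m1 by (simp add: le_divide_eq mult.commute)
  qed
  obtain KA where KA: "\<And>x. norm (A *v x) \<le> norm x * KA"
    using bounded_linear.bounded[OF matrix_vector_mul_bounded_linear] by blast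
  have bdda: "bdd_above S"
  proof (unfold S_def, rule bdd_aboveI[of _ "P.C1 * KA"], clarify)
    fix x assume x: "normA A x = 1"
    have "normA A (A *v x) \<le> P.C1 * norm (A *v x)" by (rule P.nA_le)
    also have "\<dots> \<le> P.C1 * (norm x * KA)" using KA C1p by (intro mult_left_mono) auto
    also have "norm x * KA \<le> KA"
    proof -
      have "0 \<le> KA" using KA[of e] ne by (metis norm_ge_zero order_trans zero_le_mult_iff not_le)
      thus ?thesis using P.nA_ge[of x] x by (simp add: mult_left_le_one_le)
    qed
    hence "P.C1 * (norm x * KA) \<le> P.C1 * KA" using C1p by (intro mult_left_mono) auto
    finally show "normA A (A *v x) \<le> P.C1 * KA" .
  qed
  have mM: "m \<le> M" unfolding mS MS by (rule cInf_le_cSup[OF Sne bdda bddb])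
  (* rho *)
  have hc_ball: "closure half_cube \<subseteq> cball (0::real^'n) (real CARD('n))"
  proof (rule closure_minimal[OF _ closed_cball], rule subsetI)
    fix f :: "real^'n" assume f: "f \<in> half_cube"
    have "norm f \<le> (\<Sum>i\<in>UNIV. \<bar>f $ i\<bar>)" by (rule norm_le_l1_cart)
    also have "\<dots> \<le> (\<Sum>i\<in>(UNIV::'n set). 1)"
    proof (intro sum_mono)
      fix i have "-1/2 \<le> f $ i" "f $ i < 1/2" using f by (auto simp: half_cube_def)
      thus "\<bar>f $ i\<bar> \<le> 1" by linarith
    qed
    finally show "f \<in> cball 0 (real CARD('n))" by simp
  qed
  have bddr: "bdd_above (normA A ` closure half_cube)"
  proof (rule bdd_aboveI[of _ "P.C1 * real CARD('n)"], clarify)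
    fix f :: "real^'n" assume "f \<in> closure half_cube"
    hence "norm f \<le> real CARD('n)" using hc_ball mem_cball_0 by blast
    hence "P.C1 * norm f \<le> P.C1 * real CARD('n)" using C1p by (intro mult_left_mono) auto
    thus "normA A f \<le> P.C1 * real CARD('n)" using P.nA_le[of f] by linarith
  qed
  have rho_up: "normA A f \<le> \<rho>" if "f \<in> half_cube" for f
    unfolding \<rho>_def using that closure_subset by (intro cSup_upper[OF _ bddr]) auto
  have "(0::real^'n) \<in> half_cube" by (simp add: half_cube_def)
  hence rho0: "0 \<le> \<rho>" using rho_up[of 0] by (simp add: P.nA_zero)
  (* the sequence part *)
  have seq: "(\<forall>j. normA A (x j) > R \<longrightarrow> normA A (x (Suc j)) < normA A (x j)) \<and>
           (\<forall>j. normA A (x j) \<le> R \<longrightarrow> normA A (x (Suc j)) \<le> R) \<and>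
           (\<exists>N. \<forall>j\<ge>N. normA A (x j) \<le> R) \<and>
           (\<exists>N p. 0 < p \<and> (\<forall>j\<ge>N. x (j + p) = x j))"
    if hx: "(\<forall>j. x j \<in> int_vecs) \<and> (\<forall>j. x j - A *v x (Suc j) \<in> digits A)" for x :: "nat \<Rightarrow> real^'n"
  proof -
    have xi: "x j \<in> int_vecs" for j using hx by blast
    have xd: "x j - A *v x (Suc j) \<in> digits A" for j using hx by blast
    have step: "normA A (x (Suc j)) \<le> normA A (x j) / m + \<rho>" for j
    proof -
      obtain f where f: "f \<in> half_cube" "x j - A *v x (Suc j) = A *v f"
        using xd[of j] unfolding digits_def by force
      have "x j = A *v (x (Suc j) + f)" using f(2) by (simp add: matrix_vector_right_distrib algebra_simps)
      hence "B *v x j = x (Suc j) + f" by (simp add: B_def matrix_vector_mul_assoc BA)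
      hence "x (Suc j) = B *v x j + (- f)" by (simp add: algebra_simps)
      hence "normA A (x (Suc j)) \<le> normA A (B *v x j) + normA A (- f)" using P.nA_tri by metis
      also have "\<dots> \<le> normA A (x j) / m + \<rho>"
        using K2[of "x j"] rho_up[OF f(1)] by (simp add: P.nA_uminus)
      finally show ?thesis .
    qed
    have a: "normA A (x (Suc j)) < normA A (x j)" if "normA A (x j) > R" for j
      using alg_a[OF m1 mM rho0 _ step] that unfolding R_def by blast
    have b: "normA A (x (Suc j)) \<le> R" if "normA A (x j) \<le> R" for j
      using alg_b[OF m1 mM rho0 _ step] that unfolding R_def by blast
    have c: "\<exists>N. \<forall>j\<ge>N. normA A (x j) \<le> R"
    proof (cases "\<exists>j0. normA A (x j0) \<le> R")
      case True
      then obtain j0 where j0: "normA A (x j0) \<le> R" by blast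
      have t: "normA A (x (j0 + t)) \<le> R" for t
      proof (induction t)
        case 0 show ?case using j0 by simp
      next
        case (Suc t) show ?case using b[OF Suc.IH] by simp
      qed
      show ?thesis
      proof (intro exI allI impI)
        fix j assume "j0 \<le> j"
        then obtain t where "j = j0 + t" using le_Suc_ex by auto
        thus "normA A (x j) \<le> R" using t by simp
      qed
    next
      case False
      have dec: "normA A (x (Suc j)) < normA A (x j)" for j
      proof -
        have "R < normA A (x j)" using False not_le by blast
        thus ?thesis by (rule a)
      qed
      have lt: "normA A (x (j + Suc t)) < normA A (x j)" for j t
      proof (induction t)
        case 0 show ?case using dec[of j] by simp
      next
        case (Suc t) thus ?case using dec[of "j + Suc t"] by simp
      qed
      have le0: "normA A (x j) \<le> normA A (x 0)" for j
      proof (cases j)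
        case 0 thus ?thesis by simp
      next
        case (Suc t) thus ?thesis using lt[of 0 t] by simp
      qed
      have "inj x"
      proof (rule injI, rule ccontr)
        fix i k assume eq: "x i = x k" and ne: "i \<noteq> k"
        show False
        proof (cases "i < k")
          case True
          then obtain t where kt: "k = i + Suc t" using less_imp_Suc_add by auto
          have "normA A (x k) < normA A (x i)" using lt[of i t] unfolding kt .
          thus False using eq by simp
        next
          case False
          hence "k < i" using ne by simp
          then obtain t where kt: "i = k + Suc t" using less_imp_Suc_add by auto
          have "normA A (x i) < normA A (x k)" using lt[of k t] unfolding kt .
          thus False using eq by simp
        qed
      qed
      moreover have "range x \<subseteq> {v \<in> int_vecs. norm v \<le> normA A (x 0)}"
      proof (rule subsetI, elim rangeE)
        fix v j assume "v = x j"
        moreover have "norm (x j) \<le> normA A (x 0)" using P.nA_ge[of "x j"] le0[of j] by linarith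
        ultimately show "v \<in> {v \<in> int_vecs. norm v \<le> normA A (x 0)}" using xi by simp
      qed
      hence "finite (range x)" by (rule finite_subset[OF _ finite_ball])
      ultimately have "finite (UNIV::nat set)" by (rule finite_imageD[rotated])
      thus ?thesis by simp
    qed
    have d: "\<exists>N p. 0 < p \<and> (\<forall>j\<ge>N. x (j + p) = x j)"
    proof -
      obtain N where N: "\<And>j. j \<ge> N \<Longrightarrow> normA A (x j) \<le> R" using c by blast
      have "range (\<lambda>t. x (N + t)) \<subseteq> {v \<in> int_vecs. norm v \<le> R}"
      proof (rule subsetI, elim rangeE)
        fix v t assume "v = x (N + t)"
        moreover have "norm (x (N + t)) \<le> R" using P.nA_ge[of "x (N + t)"] N[of "N + t"] by linarith
        ultimately show "v \<in> {v \<in> int_vecs. norm v \<le> R}" using xi by simp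
      qed
      hence "finite (range (\<lambda>t. x (N + t)))" by (rule finite_subset[OF _ finite_ball])
      hence "\<not> inj (\<lambda>t. x (N + t))" using finite_imageD[of "\<lambda>t. x (N + t)" UNIV] by auto
      then obtain t1 t2 where t: "t1 \<noteq> t2" "x (N + t1) = x (N + t2)" unfolding inj_def by blast
      obtain i k where ik: "N \<le> i" "i < k" "x i = x k"
      proof (cases "t1 < t2")
        case True thus ?thesis using t that[of "N + t1" "N + t2"] by simp
      next
        case False thus ?thesis using t that[of "N + t2" "N + t1"] by simp
      qed
      have sh: "x (i + t) = x (k + t)" for t
      proof (induction t)
        case 0 show ?case using ik by simp
      next
        case (Suc t)
        have "x (Suc (i + t)) = x (Suc (k + t))"
        proof (rule det[OF BA xi xi])
          show "x (i + t) - A *v x (Suc (i + t)) \<in> digits A" by (rule xd)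
          show "x (i + t) - A *v x (Suc (k + t)) \<in> digits A" using xd[of "k + t"] Suc by simp
        qed
        thus ?case by simp
      qed
      show ?thesis
      proof (intro exI conjI allI impI)
        show "0 < k - i" using ik by simp
        fix j assume "i \<le> j"
        then obtain t where j: "j = i + t" using le_Suc_ex by auto
        have "j + (k - i) = k + t" using j ik by simp
        hence "x (j + (k - i)) = x (k + t)" by simp
        also have "\<dots> = x j" using sh[of t] j by simp
        finally show "x (j + (k - i)) = x j" .
      qed
    qed
    show ?thesis using a b c d by blast
  qed
  show ?thesis using m1 seq by blast
qed


end
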